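(* Let $\alpha\in\mathbb{D}$, $\beta\in\mathbb{T}$, $\beta\neq1$, $\Psi_\alpha(z)=\frac{\alpha-z}{1-\overline{\alpha}z}$, $r_\beta(z)=\beta z$, $\varphi=\Psi_\alpha\circ r_\beta\circ\Psi_\alpha$, let $m\in\mathrm{Hol}(\mathbb{D})$, $m\not\equiv0$, and $T:\mathrm{Hol}(\mathbb{D})\to\mathrm{Hol}(\mathbb{D})$, $Tf=m\cdot(f\circ\varphi)$. If $m(z_0)=0$ for some $z_0\in\mathbb{D}$, then $\sigma_p(T)=\emptyset$ (whether $\varphi$ is periodic or aperiodic).
   Context: $\mathbb{D}$ is the open unit disc, $\mathbb{T}$ the unit circle, $\mathrm{Hol}(\mathbb{D})$ the space of holomorphic functions on $\mathbb{D}$. $\sigma_p(T)$ is the set of $\lambda\in\mathbb{C}$ such that $\lambda\mathrm{Id}-T$ is not injective. *)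

theory Defs
  imports "HOL-Complex_Analysis.Complex_Analysis"
begin

text \<open>Hol(D): functions holomorphic on the open unit disc; two functions are the same
element of Hol(D) iff they agree on the disc.\<close>

definition Psi :: "complex \<Rightarrow> complex \<Rightarrow> complex" where
  "Psi a z = (a - z) / (1 - cnj a * z)"

definition rot :: "complex \<Rightarrow> complex \<Rightarrow> complex" where
  "rot b z = b * z"

definition wcomp :: "(complex \<Rightarrow> complex) \<Rightarrow> (complex \<Rightarrow> complex) \<Rightarrow> (complex \<Rightarrow> complex) \<Rightarrow> (complex \<Rightarrow> complex)" where
  "wcomp m phi f = (\<lambda>z. m z * f (phi z))"

definition point_spectrum_Hol ::
  "((complex \<Rightarrow> complex) \<Rightarrow> (complex \<Rightarrow> complex)) \<Rightarrow> complex set" where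
  "point_spectrum_Hol T = {c. \<exists>f. f holomorphic_on ball 0 1 \<and> (\<exists>z\<in>ball 0 1. f z \<noteq> 0) \<and>
       (\<forall>z\<in>ball 0 1. T f z = c * f z)}"

end

theory Submission
  imports Defs
begin

lemma prod_zero_ident:
  fixes h k :: "complex \<Rightarrow> complex"
  assumes "h holomorphic_on ball 0 1" "k holomorphic_on ball 0 1"
    and "z1 \<in> ball 0 1" "h z1 \<noteq> 0"
    and "\<And>z. z \<in> ball 0 1 \<Longrightarrow> h z * k z = 0"
    and "w \<in> ball 0 1"
  shows "k w = 0"
proof -
  have "continuous_on (ball 0 1) h"
    using assms(1) holomorphic_on_imp_continuous_on by blast
  then have "isCont h z1" using assms(3) continuous_on_eq_continuous_at by blast
  then obtain e where e: "e > 0" "\<And>y. dist z1 y < e \<Longrightarrow> h y \<noteq> 0"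
    using continuous_at_avoid[of z1 h 0] assms(4) by blast
  obtain e2 where e2: "e2 > 0" "ball z1 e2 \<subseteq> ball 0 1"
    using assms(3) open_ball openE by blast
  define U where "U = ball z1 (min e e2)"
  have U: "U \<subseteq> ball 0 1" "open U" "U \<noteq> {}"
    using e e2 by (auto simp: U_def)
  have "\<And>z. z \<in> U \<Longrightarrow> k z = 0"
  proof -
    fix z assume "z \<in> U"
    then have "h z \<noteq> 0" "z \<in> ball 0 1" using e U by (auto simp: U_def)
    then show "k z = 0" using assms(5) by force
  qed
  then show ?thesis
    using analytic_continuation_open[OF U(2) open_ball U(3) connected_ball U(1) assms(2), of "\<lambda>_. 0"] assms(6)
    by auto
qed

lemma rot_case:
  fixes n g :: "complex \<Rightarrow> complex" and \<beta> c w0 z1 z2 :: complex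
  assumes b: "norm \<beta> = 1" and hn: "n holomorphic_on ball 0 1"
    and nz: "z1 \<in> ball 0 1" "n z1 \<noteq> 0"
    and w0: "w0 \<in> ball 0 1" "n w0 = 0" and hg: "g holomorphic_on ball 0 1"
    and eq: "\<And>w. w \<in> ball 0 1 \<Longrightarrow> c * g w = n w * g (\<beta> * w)"
    and gz: "z2 \<in> ball 0 1" "g z2 \<noteq> 0"
  shows False
proof -
  have b0: "\<beta> \<noteq> 0" using b by auto
  have bw: "\<And>w j. w \<in> ball 0 1 \<Longrightarrow> \<beta> ^ j * w \<in> ball 0 1"
    using b by (simp add: norm_mult norm_power)
  have bw1: "\<And>w. w \<in> ball 0 1 \<Longrightarrow> \<beta> * w \<in> ball 0 1"
    using b by (simp add: norm_mult)
  have gb: "(\<lambda>w. g (\<beta> * w)) holomorphic_on ball 0 1"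
  proof -
    have "(g \<circ> (\<lambda>w. \<beta> * w)) holomorphic_on ball 0 1"
      by (rule holomorphic_on_compose_gen[where t="ball 0 1"]) (auto intro!: holomorphic_intros simp: hg b norm_mult)
    then show ?thesis by (simp add: o_def)
  qed
  show False
  proof (cases "c = 0")
    case True
    have "z2 / \<beta> \<in> ball 0 1" using gz b by (simp add: norm_divide)
    then have "g (\<beta> * (z2 / \<beta>)) = 0"
      using prod_zero_ident[OF hn gb nz, of "z2 / \<beta>"] eq True by auto
    then show False using gz b0 by simp
  next
    case cnz: False
    show False
    proof (cases "\<exists>N>0. \<beta> ^ N = 1")
      case True
      then obtain N where N: "N > 0" "\<beta> ^ N = 1" by blast
      have iter: "c ^ j * g w = (\<Prod>k<j. n (\<beta> ^ k * w)) * g (\<beta> ^ j * w)"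
        if "w \<in> ball 0 1" for j w
      proof (induction j)
        case 0
        then show ?case by simp
      next
        case (Suc j)
        have "c ^ Suc j * g w = (\<Prod>k<j. n (\<beta> ^ k * w)) * (c * g (\<beta> ^ j * w))"
          using Suc by (simp add: algebra_simps)
        also have "\<dots> = (\<Prod>k<j. n (\<beta> ^ k * w)) * (n (\<beta> ^ j * w) * g (\<beta> * (\<beta> ^ j * w)))"
          using eq[OF bw[OF that]] by simp
        also have "\<dots> = (\<Prod>k<Suc j. n (\<beta> ^ k * w)) * g (\<beta> ^ Suc j * w)"
          by (simp add: algebra_simps)
        finally show ?case .
      qed
      have hp: "(\<lambda>w. (\<Prod>k<N. n (\<beta> ^ k * w)) - c ^ N) holomorphic_on ball 0 1"
      proof -
        have "(\<lambda>w. n (\<beta> ^ k * w)) holomorphic_on ball 0 1" for k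
        proof -
          have "(n \<circ> (\<lambda>w. \<beta> ^ k * w)) holomorphic_on ball 0 1"
            by (rule holomorphic_on_compose_gen[where t="ball 0 1"]) (auto intro!: holomorphic_intros simp: hn b norm_mult norm_power)
          then show ?thesis by (simp add: o_def)
        qed
        then show ?thesis by (intro holomorphic_intros) auto
      qed
      have "(\<Prod>k<N. n (\<beta> ^ k * w0)) - c ^ N = 0"
      proof (rule prod_zero_ident[OF hg hp gz _ w0(1)])
        fix z :: complex assume "z \<in> ball 0 1"
        from iter[OF this, of N] N show "g z * ((\<Prod>k<N. n (\<beta> ^ k * z)) - c ^ N) = 0"
          by (simp add: algebra_simps) metis
      qed
      moreover have "(\<Prod>k<N. n (\<beta> ^ k * w0)) = 0"
        using N w0 by (intro prod_zero) (auto intro!: bexI[of _ 0])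
      ultimately show False using cnz by simp
    next
      case aper: False
      show False
      proof (cases "w0 = 0")
        case True
        have g0: "g 0 = 0" using eq[of 0] w0 True cnz by simp
        have nc: "\<not> g constant_on ball 0 1"
          using g0 gz by (metis constant_on_def centre_in_ball zero_less_one)
        have c0: "0 \<in> ball (0::complex) 1" by simp
        show False
        proof (rule holomorphic_factor_zero_nonconstant[OF hg open_ball connected_ball c0 g0 nc])
        fix h :: "complex \<Rightarrow> complex" and r :: real and k :: nat assume hk: "0 < k" "0 < r" "ball (0::complex) r \<subseteq> ball 0 1"
            "h holomorphic_on ball 0 r"
            "\<And>w. w \<in> ball 0 r \<Longrightarrow> g w = (w - 0)^k * h w"
            "\<And>w. w \<in> ball 0 r \<Longrightarrow> h w \<noteq> 0"

        have bwr: "\<And>w. w \<in> ball 0 r \<Longrightarrow> \<beta> * w \<in> ball 0 r"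
          using b by (simp add: norm_mult)
        define F where "F w = c * h w - n w * \<beta> ^ k * h (\<beta> * w)" for w
        have Fz: "F w = 0" if "w \<in> ball 0 r" "w \<noteq> 0" for w
        proof -
          have w1: "w \<in> ball 0 1" using hk(3) that(1) by blast
          have e1: "g w = w ^ k * h w" using hk(5)[OF that(1)] by simp
          have e2: "g (\<beta> * w) = (\<beta> * w) ^ k * h (\<beta> * w)" using hk(5)[OF bwr[OF that(1)]] by simp
          have "c * (w ^ k * h w) = n w * ((\<beta> * w) ^ k * h (\<beta> * w))"
            using eq[OF w1] unfolding e1 e2 .
          then have "w ^ k * (c * h w - n w * \<beta> ^ k * h (\<beta> * w)) = 0"
            by (simp add: algebra_simps power_mult_distrib)
          then show ?thesis using that by (simp add: F_def)
        qed
        have hF: "F holomorphic_on ball 0 r"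
        proof -
          have "(h \<circ> (\<lambda>w. \<beta> * w)) holomorphic_on ball 0 r"
            by (rule holomorphic_on_compose_gen[where t="ball 0 r"]) (auto intro!: holomorphic_intros simp: hk b norm_mult)
          then have "(\<lambda>w. h (\<beta> * w)) holomorphic_on ball 0 r" by (simp add: o_def)
          moreover have "n holomorphic_on ball 0 r" using hn hk(3) holomorphic_on_subset by blast
          ultimately show ?thesis unfolding F_def using hk(4) by (intro holomorphic_intros) auto
        qed
        then have "continuous_on (ball 0 r) F" using holomorphic_on_imp_continuous_on by blast
        then have "isCont F 0"
          using hk(2) continuous_on_eq_continuous_at[OF open_ball, of 0 r F] by simp
        then have l1: "(F \<longlongrightarrow> F 0) (at 0)" by (simp add: isCont_def)
        have "eventually (\<lambda>w. F w = 0) (at 0)"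
          unfolding eventually_at using hk(2) Fz by (auto simp: dist_norm)
        then have l2: "(F \<longlongrightarrow> 0) (at 0)" by (simp add: tendsto_eventually)
        have "F 0 = 0" using tendsto_unique[OF _ l1 l2] by simp
        then have "c * h 0 = 0" using w0 True by (simp add: F_def) blast
        then show False using cnz hk(2) hk(6)[of 0] by simp
        qed
      next
        case w0nz: False
        have zk: "g (w0 / \<beta> ^ k) = 0" for k
        proof (induction k)
          case 0
          then show ?case using eq[OF w0(1)] w0 cnz by simp
        next
          case (Suc k)
          have mem: "w0 / \<beta> ^ Suc k \<in> ball 0 1" using w0 b by (simp add: norm_divide norm_power norm_mult del: power_Suc)
          have "\<beta> * (w0 / \<beta> ^ Suc k) = w0 / \<beta> ^ k" using b0 by (simp add: field_simps)
          then have "c * g (w0 / \<beta> ^ Suc k) = 0" using eq[OF mem] Suc by simp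
          then show ?case using cnz by simp
        qed
        have neq: False if "i < j" "w0 / \<beta> ^ i = w0 / \<beta> ^ j" for i j
        proof -
          have "\<beta> ^ i = \<beta> ^ j" using that w0nz b0 by (simp add: field_simps)
          have "\<beta> ^ i * \<beta> ^ (j - i) = \<beta> ^ (i + (j - i))" by (simp add: power_add)
          also have "\<dots> = \<beta> ^ j" using that by simp
          also have "\<dots> = \<beta> ^ i * 1" using \<open>\<beta> ^ i = \<beta> ^ j\<close> by simp
          finally have "\<beta> ^ i * \<beta> ^ (j - i) = \<beta> ^ i * 1" .
          then have "\<beta> ^ (j - i) = 1" using b0 by simp
          then show False using aper that(1) by (metis zero_less_diff)
        qed
        have "inj (\<lambda>k. w0 / \<beta> ^ k)"
        proof (rule injI)
          fix i j assume "w0 / \<beta> ^ i = w0 / \<beta> ^ j"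
          then show "i = j" using neq[of i j] neq[of j i] by (metis linorder_neqE_nat)
        qed
        then have inf: "infinite (range (\<lambda>k. w0 / \<beta> ^ k))" by (rule range_inj_infinite)
        have sub: "range (\<lambda>k. w0 / \<beta> ^ k) \<subseteq> cball 0 (norm w0)"
          using b by (auto simp: norm_divide norm_power)
        obtain \<xi> where xi: "\<xi> \<in> cball 0 (norm w0)" "\<xi> islimpt range (\<lambda>k. w0 / \<beta> ^ k)"
          using compact_eq_Bolzano_Weierstrass[of "cball 0 (norm w0)"] inf sub compact_cball by blast
        have cb: "cball 0 (norm w0) \<subseteq> ball 0 1" using w0 by auto
        have "g z2 = 0"
          by (rule analytic_continuation[OF hg open_ball connected_ball _ _ xi(2)])
             (use sub cb xi zk gz w0 in force)+
        then show False using gz by simp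
      qed
    qed
  qed
qed

lemma Psi_facts:
  fixes \<alpha> z :: complex
  assumes a: "\<alpha> \<in> ball 0 1" and z: "z \<in> ball 0 1"
  shows "Psi \<alpha> z \<in> ball 0 1" "Psi \<alpha> (Psi \<alpha> z) = z"
proof -
  have eq: "Psi \<alpha> z = - Moebius_function 0 \<alpha> z"
    by (simp add: Psi_def Moebius_function_def minus_divide_left)
  show "Psi \<alpha> z \<in> ball 0 1"
    using Moebius_function_norm_lt_1[of \<alpha> z 0] a z by (simp add: eq)
  have nz: "1 - cnj \<alpha> * z \<noteq> 0"
  proof
    assume "1 - cnj \<alpha> * z = 0"
    then have "norm (cnj \<alpha> * z) = 1" by (metis eq_iff_diff_eq_0 norm_one)
    moreover have "norm (cnj \<alpha> * z) < 1" using a z norm_mult_less[of "cnj \<alpha>" 1 z 1] by simp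
    ultimately show False by simp
  qed
  have aa: "cnj \<alpha> * \<alpha> \<noteq> 1"
  proof
    assume "cnj \<alpha> * \<alpha> = 1"
    then have "norm (cnj \<alpha> * \<alpha>) = 1" by simp
    then have "norm \<alpha> * norm \<alpha> = 1" by (simp add: norm_mult)
    moreover have "norm \<alpha> < 1" using a by simp
    ultimately show False using norm_mult_less[of \<alpha> 1 \<alpha> 1] by (simp add: norm_mult)
  qed
  have d2: "1 - cnj \<alpha> * \<alpha> \<noteq> 0" using aa by simp
  show "Psi \<alpha> (Psi \<alpha> z) = z"
  proof -
    define d where "d = 1 - cnj \<alpha> * z"
    define e where "e = 1 - cnj \<alpha> * \<alpha>"
    have num: "\<alpha> - (\<alpha> - z) / d = z * e / d"
      using nz unfolding d_def e_def by (simp add: field_simps)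
    have den: "1 - cnj \<alpha> * ((\<alpha> - z) / d) = e / d"
      using nz unfolding d_def e_def by (simp add: field_simps)
    have "Psi \<alpha> (Psi \<alpha> z) = (z * e / d) / (e / d)"
      unfolding Psi_def d_def[symmetric] by (simp only: num den)
    also have "\<dots> = z" using nz d2 unfolding d_def[symmetric] e_def[symmetric] by simp
    finally show ?thesis .
  qed
qed

lemma Psi_holo: "(\<alpha>::complex) \<in> ball 0 1 \<Longrightarrow> Psi \<alpha> holomorphic_on ball 0 1"
proof -
  assume a: "\<alpha> \<in> ball 0 1"
  have "(\<lambda>z. - Moebius_function 0 \<alpha> z) holomorphic_on ball 0 1"
    using Moebius_function_holomorphic[of \<alpha> 0] a by (intro holomorphic_intros) auto
  moreover have "(\<lambda>z. - Moebius_function 0 \<alpha> z) = Psi \<alpha>"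
    by (rule ext) (simp add: Psi_def Moebius_function_def minus_divide_left)
  ultimately show ?thesis by simp
qed

theorem theorem8p2:
  fixes \<alpha> \<beta> :: complex and m :: "complex \<Rightarrow> complex"
  assumes "\<alpha> \<in> ball 0 1"
    and "norm \<beta> = 1" and "\<beta> \<noteq> 1"
    and "m holomorphic_on ball 0 1"
    and "\<exists>z\<in>ball 0 1. m z \<noteq> 0"
    and "\<exists>z0\<in>ball 0 1. m z0 = 0"
  shows "point_spectrum_Hol (wcomp m (Psi \<alpha> \<circ> rot \<beta> \<circ> Psi \<alpha>)) = {}"
proof (rule ccontr)
  assume "point_spectrum_Hol (wcomp m (Psi \<alpha> \<circ> rot \<beta> \<circ> Psi \<alpha>)) \<noteq> {}"
  then obtain c f where hf: "f holomorphic_on ball 0 1" and fz: "\<exists>z\<in>ball 0 1. f z \<noteq> 0"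
    and feq: "\<forall>z\<in>ball 0 1. wcomp m (Psi \<alpha> \<circ> rot \<beta> \<circ> Psi \<alpha>) f z = c * f z"
    unfolding point_spectrum_Hol_def by blast
  obtain z1 where z1: "z1 \<in> ball 0 1" "m z1 \<noteq> 0" using assms(5) by blast
  obtain z0 where z0: "z0 \<in> ball 0 1" "m z0 = 0" using assms(6) by blast
  obtain z2 where z2: "z2 \<in> ball 0 1" "f z2 \<noteq> 0" using fz by blast
  note PD = Psi_facts(1)[OF assms(1)] and PP = Psi_facts(2)[OF assms(1)]
  have Ph: "Psi \<alpha> holomorphic_on ball 0 1" using Psi_holo assms(1) by blast
  have PDs: "Psi \<alpha> ` ball 0 1 \<subseteq> ball 0 1" using PD by blast
  have hg: "(f \<circ> Psi \<alpha>) holomorphic_on ball 0 1"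
    by (rule holomorphic_on_compose_gen[OF Ph hf PDs])
  have hn: "(m \<circ> Psi \<alpha>) holomorphic_on ball 0 1"
    by (rule holomorphic_on_compose_gen[OF Ph assms(4) PDs])
  have bw: "\<And>w. w \<in> ball 0 1 \<Longrightarrow> \<beta> * w \<in> ball 0 1"
    using assms(2) by (simp add: norm_mult)
  show False
  proof (rule rot_case[OF assms(2) hn _ _ _ _ hg])
    show "Psi \<alpha> z1 \<in> ball 0 1" using PD z1 by blast
    show "(m \<circ> Psi \<alpha>) (Psi \<alpha> z1) \<noteq> 0" using PP z1 by simp
    show "Psi \<alpha> z0 \<in> ball 0 1" using PD z0 by blast
    show "(m \<circ> Psi \<alpha>) (Psi \<alpha> z0) = 0" using PP z0 by simp
    show "Psi \<alpha> z2 \<in> ball 0 1" using PD z2 by blast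
    show "(f \<circ> Psi \<alpha>) (Psi \<alpha> z2) \<noteq> 0" using PP z2 by simp
  next
    fix w :: complex assume w: "w \<in> ball 0 1"
    have "c * (f \<circ> Psi \<alpha>) w = wcomp m (Psi \<alpha> \<circ> rot \<beta> \<circ> Psi \<alpha>) f (Psi \<alpha> w)"
      using feq PD[OF w] by simp
    also have "\<dots> = m (Psi \<alpha> w) * f (Psi \<alpha> (\<beta> * w))"
      using PP[OF w] by (simp add: wcomp_def rot_def)
    finally show "c * (f \<circ> Psi \<alpha>) w = (m \<circ> Psi \<alpha>) w * (f \<circ> Psi \<alpha>) (\<beta> * w)" by simp
  qed
qed

end
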